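(* Let $Q\in S^2_0(\mathbb R^4)$ and $a,b\in\mathbb R$, and define \[R=-(Q^3)_0+\tfrac{a-b}{2}(Q^2)_0+\big(ab+\tfrac12\operatorname{tr}(Q^2)\big)Q,\qquad 4r=\det Q+\tfrac{a-b}{6}\operatorname{tr}(Q^3)+\tfrac{ab}{2}\operatorname{tr}(Q^2)+(ab)^2.\] If $R=0$, then $r\geqslant0$.
   Context: $S^2_0(\mathbb R^4)$ is the space of real symmetric trace-free $4\times4$ matrices; $X_0=X-\frac14(\operatorname{tr}X)I$ denotes the trace-free part. *)

theory Defs
  imports "HOL-Analysis.Analysis"
begin

definition tfpart :: "real^4^4 \<Rightarrow> real^4^4" where
  "tfpart X = X - (trace X / 4) *\<^sub>R mat 1"

end

theory Submission
  imports Defs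
begin

lemma mm: "((A::real^4^4) ** B)$i$j = A$i$1*B$1$j + A$i$2*B$2$j + A$i$3*B$3$j + A$i$4*B$4$j"
  by (simp add: matrix_matrix_mult_def sum_4)

lemma tr4: "trace (A::real^4^4) = A$1$1 + A$2$2 + A$3$3 + A$4$4"
  by (simp add: trace_def sum_4)

lemma det_4:
  "det (A::'a::comm_ring_1^4^4) =
    A$1$1 * A$2$2 * A$3$3 * A$4$4
    - A$1$1 * A$2$2 * A$3$4 * A$4$3
    - A$1$1 * A$2$3 * A$3$2 * A$4$4
    + A$1$1 * A$2$3 * A$3$4 * A$4$2
    + A$1$1 * A$2$4 * A$3$2 * A$4$3
    - A$1$1 * A$2$4 * A$3$3 * A$4$2
    - A$1$2 * A$2$1 * A$3$3 * A$4$4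
    + A$1$2 * A$2$1 * A$3$4 * A$4$3
    + A$1$2 * A$2$3 * A$3$1 * A$4$4
    - A$1$2 * A$2$3 * A$3$4 * A$4$1
    - A$1$2 * A$2$4 * A$3$1 * A$4$3
    + A$1$2 * A$2$4 * A$3$3 * A$4$1
    + A$1$3 * A$2$1 * A$3$2 * A$4$4
    - A$1$3 * A$2$1 * A$3$4 * A$4$2
    - A$1$3 * A$2$2 * A$3$1 * A$4$4
    + A$1$3 * A$2$2 * A$3$4 * A$4$1
    + A$1$3 * A$2$4 * A$3$1 * A$4$2
    - A$1$3 * A$2$4 * A$3$2 * A$4$1
    - A$1$4 * A$2$1 * A$3$2 * A$4$3
    + A$1$4 * A$2$1 * A$3$3 * A$4$2
    + A$1$4 * A$2$2 * A$3$1 * A$4$3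
    - A$1$4 * A$2$2 * A$3$3 * A$4$1
    - A$1$4 * A$2$3 * A$3$1 * A$4$2
    + A$1$4 * A$2$3 * A$3$2 * A$4$1"
proof -
  have f1: "finite {2::4, 3, 4}" "1 \<notin> {2::4, 3, 4}" by auto
  have f2: "finite {3::4, 4}" "2 \<notin> {3::4, 4}" by auto
  have f3: "finite {4::4}" "3 \<notin> {4::4}" by auto
  show ?thesis
    unfolding det_def UNIV_4
    unfolding sum_over_permutations_insert[OF f1]
    unfolding sum_over_permutations_insert[OF f2]
    unfolding sum_over_permutations_insert[OF f3]
    unfolding permutes_sing
    by (simp add: sign_swap_id permutation_swap_id permutation_compose sign_compose swap_id_eq algebra_simps)
qed

lemma CH:
  fixes Q :: "real^4^4"
  assumes sym: "transpose Q = Q" and tr: "trace Q = 0"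
  shows "Q**Q**Q**Q = (trace(Q**Q)/2) *\<^sub>R (Q**Q) + (trace(Q**Q**Q)/3) *\<^sub>R Q - det Q *\<^sub>R mat 1"
proof -
  have sy: "Q$j$i = Q$i$j" for i j
  proof -
    have "transpose Q $ i $ j = Q $ i $ j" using sym by simp
    then show ?thesis by (simp add: transpose_def)
  qed
  have s: "Q$2$1 = Q$1$2" "Q$3$1 = Q$1$3" "Q$4$1 = Q$1$4" "Q$3$2 = Q$2$3" "Q$4$2 = Q$2$4" "Q$4$3 = Q$3$4"
    using sy by simp_all
  have t: "Q$4$4 = -(Q$1$1+Q$2$2+Q$3$3)"
    using tr by (simp add: trace_def sum_4)
  have m: "(mat 1::real^4^4)$1$1 = 1" "(mat 1::real^4^4)$2$2 = 1" "(mat 1::real^4^4)$3$3 = 1" "(mat 1::real^4^4)$4$4 = 1"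
    "(mat 1::real^4^4)$1$2 = 0" "(mat 1::real^4^4)$1$3 = 0" "(mat 1::real^4^4)$1$4 = 0"
    "(mat 1::real^4^4)$2$1 = 0" "(mat 1::real^4^4)$2$3 = 0" "(mat 1::real^4^4)$2$4 = 0"
    "(mat 1::real^4^4)$3$1 = 0" "(mat 1::real^4^4)$3$2 = 0" "(mat 1::real^4^4)$3$4 = 0"
    "(mat 1::real^4^4)$4$1 = 0" "(mat 1::real^4^4)$4$2 = 0" "(mat 1::real^4^4)$4$3 = 0"
    by (simp_all add: mat_def)
  have e11: "(Q**Q**Q**Q)$1$1 = (trace(Q**Q)/2) * (Q**Q)$1$1 + (trace(Q**Q**Q)/3) * Q$1$1 - det Q * (mat 1::real^4^4)$1$1"
    unfolding mm tr4 det_4 s t m by algebra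
  have e12: "(Q**Q**Q**Q)$1$2 = (trace(Q**Q)/2) * (Q**Q)$1$2 + (trace(Q**Q**Q)/3) * Q$1$2 - det Q * (mat 1::real^4^4)$1$2"
    unfolding mm tr4 det_4 s t m by algebra
  have e13: "(Q**Q**Q**Q)$1$3 = (trace(Q**Q)/2) * (Q**Q)$1$3 + (trace(Q**Q**Q)/3) * Q$1$3 - det Q * (mat 1::real^4^4)$1$3"
    unfolding mm tr4 det_4 s t m by algebra
  have e14: "(Q**Q**Q**Q)$1$4 = (trace(Q**Q)/2) * (Q**Q)$1$4 + (trace(Q**Q**Q)/3) * Q$1$4 - det Q * (mat 1::real^4^4)$1$4"
    unfolding mm tr4 det_4 s t m by algebra
  have e21: "(Q**Q**Q**Q)$2$1 = (trace(Q**Q)/2) * (Q**Q)$2$1 + (trace(Q**Q**Q)/3) * Q$2$1 - det Q * (mat 1::real^4^4)$2$1"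
    unfolding mm tr4 det_4 s t m by algebra
  have e22: "(Q**Q**Q**Q)$2$2 = (trace(Q**Q)/2) * (Q**Q)$2$2 + (trace(Q**Q**Q)/3) * Q$2$2 - det Q * (mat 1::real^4^4)$2$2"
    unfolding mm tr4 det_4 s t m by algebra
  have e23: "(Q**Q**Q**Q)$2$3 = (trace(Q**Q)/2) * (Q**Q)$2$3 + (trace(Q**Q**Q)/3) * Q$2$3 - det Q * (mat 1::real^4^4)$2$3"
    unfolding mm tr4 det_4 s t m by algebra
  have e24: "(Q**Q**Q**Q)$2$4 = (trace(Q**Q)/2) * (Q**Q)$2$4 + (trace(Q**Q**Q)/3) * Q$2$4 - det Q * (mat 1::real^4^4)$2$4"
    unfolding mm tr4 det_4 s t m by algebra
  have e31: "(Q**Q**Q**Q)$3$1 = (trace(Q**Q)/2) * (Q**Q)$3$1 + (trace(Q**Q**Q)/3) * Q$3$1 - det Q * (mat 1::real^4^4)$3$1"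
    unfolding mm tr4 det_4 s t m by algebra
  have e32: "(Q**Q**Q**Q)$3$2 = (trace(Q**Q)/2) * (Q**Q)$3$2 + (trace(Q**Q**Q)/3) * Q$3$2 - det Q * (mat 1::real^4^4)$3$2"
    unfolding mm tr4 det_4 s t m by algebra
  have e33: "(Q**Q**Q**Q)$3$3 = (trace(Q**Q)/2) * (Q**Q)$3$3 + (trace(Q**Q**Q)/3) * Q$3$3 - det Q * (mat 1::real^4^4)$3$3"
    unfolding mm tr4 det_4 s t m by algebra
  have e34: "(Q**Q**Q**Q)$3$4 = (trace(Q**Q)/2) * (Q**Q)$3$4 + (trace(Q**Q**Q)/3) * Q$3$4 - det Q * (mat 1::real^4^4)$3$4"
    unfolding mm tr4 det_4 s t m by algebra
  have e41: "(Q**Q**Q**Q)$4$1 = (trace(Q**Q)/2) * (Q**Q)$4$1 + (trace(Q**Q**Q)/3) * Q$4$1 - det Q * (mat 1::real^4^4)$4$1"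
    unfolding mm tr4 det_4 s t m by algebra
  have e42: "(Q**Q**Q**Q)$4$2 = (trace(Q**Q)/2) * (Q**Q)$4$2 + (trace(Q**Q**Q)/3) * Q$4$2 - det Q * (mat 1::real^4^4)$4$2"
    unfolding mm tr4 det_4 s t m by algebra
  have e43: "(Q**Q**Q**Q)$4$3 = (trace(Q**Q)/2) * (Q**Q)$4$3 + (trace(Q**Q**Q)/3) * Q$4$3 - det Q * (mat 1::real^4^4)$4$3"
    unfolding mm tr4 det_4 s t m by algebra
  have e44: "(Q**Q**Q**Q)$4$4 = (trace(Q**Q)/2) * (Q**Q)$4$4 + (trace(Q**Q**Q)/3) * Q$4$4 - det Q * (mat 1::real^4^4)$4$4"
    unfolding mm tr4 det_4 s t m by algebra
  show ?thesis
    unfolding vec_eq_iff forall_4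
    by (simp only: vector_add_component vector_minus_component vector_scaleR_component real_scaleR_def
        e11 e12 e13 e14 e21 e22 e23 e24 e31 e32 e33 e34 e41 e42 e43 e44 simp_thms)
qed


lemma mrd_add: "((A::real^4^4) + B) ** C = A ** C + B ** C"
  by (simp add: mm vec_eq_iff algebra_simps)

lemma mrd_scale: "((k::real) *\<^sub>R (A::real^4^4)) ** C = k *\<^sub>R (A ** C)"
  by (simp add: mm vec_eq_iff algebra_simps)

lemma mrd_diff: "((A::real^4^4) - B) ** C = A ** C - B ** C"
  by (simp add: mm vec_eq_iff algebra_simps)

lemma tr_add: "trace ((A::real^4^4) + B) = trace A + trace B"
  by (simp add: tr4)

lemma tr_scale: "trace ((k::real) *\<^sub>R (A::real^4^4)) = k * trace A"
  by (simp add: tr4 algebra_simps)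

lemma tr_I: "trace (mat 1::real^4^4) = 4"
  by (simp add: tr4 mat_def)

lemma scale_zero: "(u::real) *\<^sub>R (Q::real^4^4) + v *\<^sub>R mat 1 = 0 \<Longrightarrow> trace Q = 0 \<Longrightarrow> u *\<^sub>R Q = 0 \<and> v = 0"
proof -
  assume h: "u *\<^sub>R Q + v *\<^sub>R mat 1 = 0" and t: "trace Q = 0"
  have "trace (u *\<^sub>R Q + v *\<^sub>R mat 1) = 0" using h by (simp add: tr4)
  then have v: "v = 0" using t by (simp add: tr_add tr_scale tr_I)
  then show ?thesis using h by simp
qed

lemma entry_eq: "(\<And>i j. (X::real^4^4)$i$j = Y$i$j) \<Longrightarrow> X = Y"
  by (simp add: vec_eq_iff)

theorem mainTheorem6:
  fixes Q :: "real^4^4" and a b :: real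
  assumes sym: "transpose Q = Q"
    and trfree: "trace Q = 0"
    and R0: "- tfpart (Q ** Q ** Q) + ((a - b) / 2) *\<^sub>R tfpart (Q ** Q)
             + (a * b + trace (Q ** Q) / 2) *\<^sub>R Q = 0"
  shows "(det Q + (a - b) / 6 * trace (Q ** Q ** Q) + a * b / 2 * trace (Q ** Q)
          + (a * b)^2) / 4 \<ge> 0"
proof -
  define t2 where "t2 = trace (Q**Q)"
  define t3 where "t3 = trace (Q**Q**Q)"
  define d where "d = det Q"
  define s where "s = (a-b)/2"
  define m where "m = a*b"
  define k where "k = m + t2/2"
  define c where "c = (t3 - s*t2)/4"
  have goal: "(det Q + (a - b) / 6 * trace (Q ** Q ** Q) + a * b / 2 * trace (Q ** Q)
          + (a * b)^2) / 4 = (d + s/3 * t3 + m/2*t2 + m^2)/4"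
    by (simp add: d_def s_def m_def t2_def t3_def)
  have E1: "Q**Q**Q = s *\<^sub>R (Q**Q) + k *\<^sub>R Q + c *\<^sub>R mat 1"
  proof -
    show ?thesis
      apply (rule entry_eq)
      subgoal for i j
        using arg_cong[OF R0, of "\<lambda>M. M$i$j"]
        apply (simp only: tfpart_def s_def k_def c_def m_def t2_def t3_def vector_add_component vector_minus_component vector_uminus_component vector_scaleR_component real_scaleR_def zero_index)
        by (simp add: field_simps)
      done
  qed
  have E4: "Q**Q**Q**Q = (s * s+k) *\<^sub>R (Q**Q) + (s*k+c) *\<^sub>R Q + (s*c) *\<^sub>R mat 1"
  proof -
    have "Q**Q**Q**Q = (s *\<^sub>R (Q**Q) + k *\<^sub>R Q + c *\<^sub>R mat 1) ** Q"
      using E1 by simp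
    also have "\<dots> = s *\<^sub>R (Q**Q**Q) + k *\<^sub>R (Q**Q) + c *\<^sub>R Q"
      by (simp add: mrd_add mrd_diff mrd_scale)
    also have "\<dots> = (s * s+k) *\<^sub>R (Q**Q) + (s*k+c) *\<^sub>R Q + (s*c) *\<^sub>R mat 1"
      unfolding E1 by (simp add: vec_eq_iff algebra_simps)
    finally show ?thesis .
  qed
  have CH': "Q**Q**Q**Q = (t2/2) *\<^sub>R (Q**Q) + (t3/3) *\<^sub>R Q - d *\<^sub>R mat 1"
    using CH[OF sym trfree] by (simp add: t2_def t3_def d_def)
  have Dd: "t2*t2/2 - 4*d = (s * s+k)*t2 + 4*(s*c)"
  proof -
    have "trace (Q**Q**Q**Q) = t2*t2/2 - 4*d"
      unfolding CH' by (simp add: tr_add tr_scale tr_I trace_sub trfree t2_def)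
    moreover have "trace (Q**Q**Q**Q) = (s * s+k)*t2 + 4*(s*c)"
      unfolding E4 by (simp add: tr_add tr_scale tr_I trfree t2_def)
    ultimately show ?thesis by simp
  qed

  define A where "A = s * s + k - t2/2"
  define \<beta> where "\<beta> = s*k + c - t3/3"
  define \<gamma> where "\<gamma> = s*c + d"
  have E3: "A *\<^sub>R (Q**Q) + \<beta> *\<^sub>R Q + \<gamma> *\<^sub>R mat 1 = 0"
  proof -
    have "(s * s+k) *\<^sub>R (Q**Q) + (s*k+c) *\<^sub>R Q + (s*c) *\<^sub>R mat 1
       = (t2/2) *\<^sub>R (Q**Q) + (t3/3) *\<^sub>R Q - d *\<^sub>R (mat 1::real^4^4)"
      using E4 CH' by simp
    note H = this
    show ?thesis
        apply (rule entry_eq)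
        subgoal for i j
          using arg_cong[OF H, of "\<lambda>M. M$i$j"]
          apply (simp only: A_def \<beta>_def \<gamma>_def vector_add_component vector_minus_component vector_uminus_component vector_scaleR_component real_scaleR_def zero_index)
          by (simp add: field_simps)
        done
  qed
  have Q0: "(d + s/3 * t3 + m/2*t2 + m^2)/4 \<ge> 0" if "Q = 0"
  proof -
    have "t2 = 0" "t3 = 0" using that by (simp_all add: t2_def t3_def tr4)
    moreover have "d = 0" using that by (simp add: d_def det_4)
    ultimately show ?thesis by simp
  qed
  have main: "(d + s/3 * t3 + m/2*t2 + m^2)/4 \<ge> 0"
  proof (cases "A = 0")
    case True
    have "(\<beta> *\<^sub>R Q = 0 \<and> \<gamma> = 0)"
      using scale_zero[of \<beta> Q \<gamma>] E3 True trfree by simp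
    then have g0: "\<gamma> = 0" and bq: "\<beta> = 0 \<or> Q = 0" by auto
    from bq show ?thesis
    proof
      assume b0: "\<beta> = 0"
      have mE: "m = -s* s" using True unfolding A_def k_def by simp
      have kE: "k = t2/2 - s* s" using mE unfolding k_def by simp
      have t3E: "t3 = 3* s*t2 - 12* s* s* s"
        using b0 unfolding \<beta>_def kE c_def by (simp add: field_simps)
      have dE: "d = -s*c" using g0 unfolding \<gamma>_def by simp
      have dE2: "d = -s* s*t2/2 + 3* s* s* s* s"
        unfolding dE c_def t3E by (simp add: field_simps)
      have "d + s/3 * t3 + m/2*t2 + m^2 = 0"
        unfolding dE2 t3E mE by (simp add: field_simps power2_eq_square)
      then show ?thesis by simp
    qed (use Q0 in auto)
  next
    case False
    define \<delta> where "\<delta> = \<beta>/A"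
    define \<tau> where "\<tau> = -\<gamma>/A"
    have Q2: "Q**Q = (-\<delta>) *\<^sub>R Q + \<tau> *\<^sub>R mat 1"
    proof -
      note H = E3
      show ?thesis
        apply (rule entry_eq)
        subgoal for i j
          using arg_cong[OF H, of "\<lambda>M. M$i$j"] False
          apply (simp only: \<delta>_def \<tau>_def vector_add_component vector_minus_component vector_uminus_component vector_scaleR_component real_scaleR_def zero_index)
          by (simp add: field_simps)
        done
    qed
    have t2e: "t2 = 4*\<tau>"
      unfolding t2_def Q2 by (simp add: tr_add trace_sub tr_scale tr_I trfree)
    have Q3: "Q**Q**Q = (\<delta>*\<delta>+\<tau>) *\<^sub>R Q + (-\<delta>*\<tau>) *\<^sub>R mat 1"
    proof -
      have "Q**Q**Q = ((-\<delta>) *\<^sub>R Q + \<tau> *\<^sub>R mat 1) ** Q" using Q2 by simp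
      also have "\<dots> = (-\<delta>) *\<^sub>R (Q**Q) + \<tau> *\<^sub>R Q" by (simp add: mrd_add mrd_diff mrd_scale)
      also have "\<dots> = (\<delta>*\<delta>+\<tau>) *\<^sub>R Q + (-\<delta>*\<tau>) *\<^sub>R mat 1"
        unfolding Q2 by (simp add: vec_eq_iff algebra_simps)
      finally show ?thesis .
    qed
    have t3e: "t3 = -4*\<delta>*\<tau>"
      unfolding t3_def Q3 by (simp add: tr_add trace_sub tr_scale tr_I trfree)
    have Q4: "Q**Q**Q**Q = ((\<delta>*\<delta>+\<tau>)*(-\<delta>) - \<delta>*\<tau>) *\<^sub>R Q + ((\<delta>*\<delta>+\<tau>)*\<tau>) *\<^sub>R mat 1"
    proof -
      have "Q**Q**Q**Q = ((\<delta>*\<delta>+\<tau>) *\<^sub>R Q + (-\<delta>*\<tau>) *\<^sub>R mat 1) ** Q" using Q3 by simp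
      also have "\<dots> = (\<delta>*\<delta>+\<tau>) *\<^sub>R (Q**Q) + (-\<delta>*\<tau>) *\<^sub>R Q" by (simp add: mrd_add mrd_diff mrd_scale)
      also have "\<dots> = ((\<delta>*\<delta>+\<tau>)*(-\<delta>) - \<delta>*\<tau>) *\<^sub>R Q + ((\<delta>*\<delta>+\<tau>)*\<tau>) *\<^sub>R mat 1"
        unfolding Q2 by (simp add: vec_eq_iff algebra_simps)
      finally show ?thesis .
    qed
    define u where "u = \<delta>*\<delta>+\<tau>+s*\<delta>-k"
    define v where "v = -\<delta>*\<tau> - s*\<tau> - c"
    have uv: "u *\<^sub>R Q + v *\<^sub>R mat 1 = 0"
    proof -
      have "(\<delta>*\<delta>+\<tau>) *\<^sub>R Q + (-\<delta>*\<tau>) *\<^sub>R mat 1 = s *\<^sub>R ((-\<delta>) *\<^sub>R Q + \<tau> *\<^sub>R mat 1) + k *\<^sub>R Q + c *\<^sub>R (mat 1::real^4^4)"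
        using E1 Q2 Q3 by simp
      note H = this
      show ?thesis
        apply (rule entry_eq)
        subgoal for i j
          using arg_cong[OF H, of "\<lambda>M. M$i$j"]
          apply (simp only: u_def v_def vector_add_component vector_minus_component vector_uminus_component vector_scaleR_component real_scaleR_def zero_index)
          by (simp add: field_simps)
        done
    qed
    define w where "w = (\<delta>*\<delta>+\<tau>)*(-\<delta>) - \<delta>*\<tau> + (t2/2)*\<delta> - t3/3"
    define z where "z = (\<delta>*\<delta>+\<tau>)*\<tau> - (t2/2)*\<tau> + d"
    have wz: "w *\<^sub>R Q + z *\<^sub>R mat 1 = 0"
    proof -
      have "((\<delta>*\<delta>+\<tau>)*(-\<delta>) - \<delta>*\<tau>) *\<^sub>R Q + ((\<delta>*\<delta>+\<tau>)*\<tau>) *\<^sub>R mat 1 = (t2/2) *\<^sub>R ((-\<delta>) *\<^sub>R Q + \<tau> *\<^sub>R mat 1) + (t3/3) *\<^sub>R Q - d *\<^sub>R (mat 1::real^4^4)"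
        using CH' Q2 Q4 by simp
      note H = this
      show ?thesis
        apply (rule entry_eq)
        subgoal for i j
          using arg_cong[OF H, of "\<lambda>M. M$i$j"]
          apply (simp only: w_def z_def vector_add_component vector_minus_component vector_uminus_component vector_scaleR_component real_scaleR_def zero_index)
          by (simp add: field_simps)
        done
    qed
    from scale_zero[OF uv trfree] have u0: "u *\<^sub>R Q = 0" by simp
    from scale_zero[OF wz trfree] have w0: "w *\<^sub>R Q = 0" and z0: "z = 0" by simp_all
    show ?thesis
    proof (cases "Q = 0")
      case True then show ?thesis using Q0 by simp
    next
      case Qn: False
      have u00: "u = 0" using u0 Qn by simp
      have w00: "w = 0" using w0 Qn by simp
      have mE: "m = \<delta>*\<delta> + s*\<delta> - \<tau>"
        using u00 t2e unfolding u_def k_def by simp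
      have dE: "d = \<tau>*\<tau> - \<tau>*\<delta>*\<delta>"
        using z0 t2e unfolding z_def by (simp add: algebra_simps)
      have wE0: "\<delta> * (3*\<delta>*\<delta> - 4*\<tau>) = -3*w"
        unfolding w_def t2e t3e by (simp add: algebra_simps)
      have wE: "\<delta> * (3*\<delta>*\<delta> - 4*\<tau>) = 0"
        using wE0 w00 by simp
      have "\<delta> = 0 \<or> 3*\<delta>*\<delta> - 4*\<tau> = 0"
        using wE by simp
      then have "\<delta> = 0 \<or> \<tau> = 3/4*\<delta>*\<delta>" by linarith
      then show ?thesis
      proof
        assume "\<delta> = 0"
        then have "d + s/3 * t3 + m/2*t2 + m^2 = 0"
          using mE dE t2e t3e by (simp add: power2_eq_square algebra_simps)
        then show ?thesis by simp
      next
        assume h: "\<tau> = 3/4*\<delta>*\<delta>"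
        have "d + s/3 * t3 + m/2*t2 + m^2 = (\<delta>*(\<delta>/2+s))^2"
          using mE dE t2e t3e h by (simp add: power2_eq_square algebra_simps)
        then show ?thesis by simp
      qed
    qed
  qed
  show ?thesis using goal main by simp
qed

end
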